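(* Let $A,B,C$ be convex ($1$-convex) sets of real numbers with $|A|=|B|=|C|=N$. Then the number of solutions of $a+b=c$ with $a\in A$, $b\in B$, $c\in C$ is $\ll N^{5/3}$.
   Context: A finite set $A=\{a_1<\dots<a_N\}\subset\mathbb{R}$ is convex ($1$-convex) if the sequence of gaps $a_{i+1}-a_i$, $1\leq i\leq N-1$, is strictly monotone. *)

theory Defs
  imports Complex_Main
begin

definition gap_seq :: "real set \<Rightarrow> nat \<Rightarrow> real" where
  "gap_seq A i = sorted_list_of_set A ! (Suc i) - sorted_list_of_set A ! i"

definition convex_set :: "real set \<Rightarrow> bool" where
  "convex_set A \<longleftrightarrow> finite A \<and>
     ((\<forall>i j. i < j \<and> j < card A - 1 \<longrightarrow> gap_seq A i < gap_seq A j) \<or>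
      (\<forall>i j. i < j \<and> j < card A - 1 \<longrightarrow> gap_seq A i > gap_seq A j))"

end

theory Submission
  imports Defs
begin


lemma div_close:
  fixes i j m :: nat
  assumes "0 < m" "i \<le> j" "i div m = j div m"
  shows "j < i + m"
proof -
  have "m * (i div m) \<le> i" by (simp add: times_div_less_eq_dividend)
  moreover have "j = m * (j div m) + j mod m" by simp
  moreover have "j mod m < m" using assms(1) by simp
  moreover have "m * (i div m) = m * (j div m)" using assms(3) by simp
  ultimately show ?thesis by linarith
qed

lemma conv_inj:
  assumes cv: "convex_set C" and N: "card C = N"
  defines "c \<equiv> (\<lambda>k. sorted_list_of_set C ! k)"
  assumes q: "1 \<le> q" "k + q < N" "k2 + q < N" and eq: "c (k+q) - c k = c (k2+q) - c k2"
  shows "k = k2"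
proof -
  have tel: "c (k+q) - c k = (\<Sum>t<q. gap_seq C (k+t))" for k q
    by (induction q) (simp_all add: gap_seq_def c_def)
  have main: False if lt: "k < k2" and "k2 + q < N" and "c (k+q) - c k = c (k2+q) - c k2" for k k2
  proof -
    have "0 \<in> {..<q}" using q(1) by simp
    then have ne: "{..<q} \<noteq> {}" by blast
    from cv have "(\<forall>i j. i < j \<and> j < N - 1 \<longrightarrow> gap_seq C i < gap_seq C j) \<or>
      (\<forall>i j. i < j \<and> j < N - 1 \<longrightarrow> gap_seq C i > gap_seq C j)" unfolding convex_set_def N by blast
    then show False
    proof
      assume h: "\<forall>i j. i < j \<and> j < N - 1 \<longrightarrow> gap_seq C i < gap_seq C j"
      have "(\<Sum>t<q. gap_seq C (k+t)) < (\<Sum>t<q. gap_seq C (k2+t))"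
        by (rule sum_strict_mono[OF _ ne]) (use h lt that(2) in auto)
      then show False using that(3) tel by simp
    next
      assume h: "\<forall>i j. i < j \<and> j < N - 1 \<longrightarrow> gap_seq C i > gap_seq C j"
      have "(\<Sum>t<q. gap_seq C (k+t)) > (\<Sum>t<q. gap_seq C (k2+t))"
        by (rule sum_strict_mono[OF _ ne]) (use h lt that(2) in auto)
      then show False using that(3) tel by simp
    qed
  qed
  show ?thesis
    using main[of k k2] main[of k2 k] q eq by (cases k k2 rule: linorder_cases) auto
qed



lemma count_bound:
  fixes a c :: "nat \<Rightarrow> real" and B :: "real set" and N D :: nat
  assumes am: "\<And>i j. i < j \<Longrightarrow> j < N \<Longrightarrow> a i < a j"
    and cm: "\<And>i j. i < j \<Longrightarrow> j < N \<Longrightarrow> c i < c j"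
    and cv: "\<And>k k2 q. 1 \<le> q \<Longrightarrow> k + q < N \<Longrightarrow> k2 + q < N \<Longrightarrow>
               c (k+q) - c k = c (k2+q) - c k2 \<Longrightarrow> k = k2"
    and fB: "finite B" and cB: "card B = N"
  shows "card {(i,k). i < N \<and> k < N \<and> c k - a i \<in> B}
           \<le> N * (D * D) + 2 * (N * (N div (D+1) + 1))"
proof -
  define S where "S = {(i,k). i < N \<and> k < N \<and> c k - a i \<in> B}"
  have aiff: "a i < a j \<longleftrightarrow> i < j" if "i < N" "j < N" for i j
    using am[of i j] am[of j i] that by (cases i j rule: linorder_cases) auto
  have ciff: "c i < c j \<longleftrightarrow> i < j" if "i < N" "j < N" for i j
    using cm[of i j] cm[of j i] that by (cases i j rule: linorder_cases) auto
  have ceq: "c i = c j \<Longrightarrow> i < N \<Longrightarrow> j < N \<Longrightarrow> i = j" for i j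
    using ciff[of i j] ciff[of j i] by (cases i j rule: linorder_cases) auto
  define P where "P = (\<lambda>i k (pq::nat\<times>nat). 1 \<le> fst pq \<and> fst pq \<le> D \<and> 1 \<le> snd pq \<and> snd pq \<le> D \<and>
      (i + fst pq, k + snd pq) \<in> S \<and> c (k + snd pq) - a (i + fst pq) = c k - a i)"
  define G where "G = {(i,k) \<in> S. \<exists>pq. P i k pq}"
  define Bi where "Bi = {(i,k) \<in> S. \<not> (\<exists>i' k'. (i',k') \<in> S \<and> c k' - a i' = c k - a i \<and> i < i' \<and> i' \<le> i + D)}"
  define Bk where "Bk = {(i,k) \<in> S. \<not> (\<exists>i' k'. (i',k') \<in> S \<and> c k' - a i' = c k - a i \<and> k < k' \<and> k' \<le> k + D)}"
  have cover: "S \<subseteq> G \<union> Bi \<union> Bk"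
  proof
    fix z assume zS: "z \<in> S"
    obtain i k where z: "z = (i,k)" by (cases z)
    show "z \<in> G \<union> Bi \<union> Bk"
    proof (rule ccontr)
      assume "z \<notin> G \<union> Bi \<union> Bk"
      with zS z obtain i1 k1 i2 k2 where
        1: "(i1,k1) \<in> S" "c k1 - a i1 = c k - a i" "i < i1" "i1 \<le> i + D" and
        2: "(i2,k2) \<in> S" "c k2 - a i2 = c k - a i" "k < k2" "k2 \<le> k + D" and nG: "z \<notin> G"
        unfolding Bi_def Bk_def by auto
      have iN: "i < N" "k < N" "i1 < N" "k1 < N" "i2 < N" "k2 < N" using 1 2 zS z unfolding S_def by auto
      have "a i < a i1" using aiff 1 iN by auto
      then have "c k < c k1" using 1 by linarith
      then have kk1: "k < k1" using ciff iN by auto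
      have "c k < c k2" using ciff 2 iN by auto
      then have "a i < a i2" using 2 by linarith
      then have ii2: "i < i2" using aiff iN by auto
      show False
      proof (cases "i1 \<le> i2")
        case True
        then have "a i1 \<le> a i2" using aiff iN by (meson not_less)
        then have "c k1 \<le> c k2" using 1 2 by linarith
        then have "k1 \<le> k2" using ciff iN by (meson not_less)
        then have "P i k (i1 - i, k1 - k)" unfolding P_def using 1 2 kk1 by auto
        then show False using nG zS z unfolding G_def by auto
      next
        case False
        then have "P i k (i2 - i, k2 - k)" unfolding P_def using 1 2 ii2 by auto
        then show False using nG zS z unfolding G_def by auto
      qed
    qed
  qed
  have finS: "finite S"
    by (rule finite_subset[of _ "{..<N} \<times> {..<N}"]) (auto simp: S_def)
  have cardG: "card G \<le> N * (D * D)"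
  proof -
    define f where "f = (\<lambda>(i::nat,k::nat). (i, SOME pq. P i k pq))"
    have "inj_on f G"
    proof (rule inj_onI)
      fix x y assume x: "x \<in> G" and y: "y \<in> G" and fe: "f x = f y"
      obtain i k where xe: "x = (i,k)" by (cases x)
      obtain i2 k2 where ye: "y = (i2,k2)" by (cases y)
      have Px: "P i k (SOME pq. P i k pq)" using x xe unfolding G_def by (auto intro: someI)
      have Py: "P i2 k2 (SOME pq. P i2 k2 pq)" using y ye unfolding G_def by (auto intro: someI)
      from fe xe ye have ii: "i2 = i" and sm: "(SOME pq. P i2 k2 pq) = (SOME pq. P i k pq)"
        unfolding f_def by auto
      obtain p q where pq: "(SOME pq. P i k pq) = (p,q)" by (cases "SOME pq. P i k pq")
      have A: "1 \<le> q" "k + q < N" "c (k+q) - a (i+p) = c k - a i"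
        using Px pq unfolding P_def S_def by auto
      have B: "k2 + q < N" "c (k2+q) - a (i+p) = c k2 - a i"
        using Py pq sm ii unfolding P_def S_def by auto
      have "k = k2" by (rule cv[OF A(1) A(2) B(1)]) (use A(3) B(2) in linarith)
      then show "x = y" using xe ye ii by simp
    qed
    moreover have "f ` G \<subseteq> {..<N} \<times> ({1..D} \<times> {1..D})"
    proof
      fix y assume "y \<in> f ` G"
      then obtain i k where ik: "(i,k) \<in> G" "y = f (i,k)" by auto
      have "P i k (SOME pq. P i k pq)" using ik unfolding G_def by (auto intro: someI)
      then show "y \<in> {..<N} \<times> ({1..D} \<times> {1..D})"
        using ik unfolding P_def f_def G_def S_def by (auto simp: mem_Times_iff)
    qed
    ultimately have "card G \<le> card ({..<N} \<times> ({1..D} \<times> {1..D}))"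
      by (metis card_inj_on_le finite_SigmaI finite_atLeastAtMost finite_lessThan)
    then show ?thesis by (simp add: card_cartesian_product)
  qed
  have cardBi: "card Bi \<le> N * (N div (D+1) + 1)"
  proof -
    define f where "f = (\<lambda>(i::nat,k::nat). (c k - a i, i div (D+1)))"
    have "inj_on f Bi"
    proof (rule inj_onI)
      fix x y assume x: "x \<in> Bi" and y: "y \<in> Bi" and fe: "f x = f y"
      obtain i k where xe: "x = (i,k)" by (cases x)
      obtain i2 k2 where ye: "y = (i2,k2)" by (cases y)
      from fe xe ye have e1: "c k - a i = c k2 - a i2" and e2: "i div (D+1) = i2 div (D+1)"
        unfolding f_def by auto
      have "i = i2"
      proof (cases i i2 rule: linorder_cases)
        case less
        then have "i2 < i + (D+1)" using div_close[of "D+1" i i2] e2 by auto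
        then show ?thesis using x y xe ye e1 less unfolding Bi_def by auto
      next
        case greater
        then have "i < i2 + (D+1)" using div_close[of "D+1" i2 i] e2 by auto
        then show ?thesis using x y xe ye e1 greater unfolding Bi_def by auto
      qed simp
      moreover have "k < N" "k2 < N" using x y xe ye unfolding Bi_def S_def by auto
      ultimately have "k = k2" using e1 ceq by auto
      then show "x = y" using xe ye \<open>i = i2\<close> by simp
    qed
    moreover have "f ` Bi \<subseteq> B \<times> {..N div (D+1)}"
      by (auto simp: f_def Bi_def S_def div_le_mono)
    ultimately have "card Bi \<le> card (B \<times> {..N div (D+1)})"
      by (metis card_inj_on_le finite_SigmaI finite_atMost fB)
    then show ?thesis by (simp add: card_cartesian_product cB)
  qed
  have cardBk: "card Bk \<le> N * (N div (D+1) + 1)"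
  proof -
    define f where "f = (\<lambda>(i::nat,k::nat). (c k - a i, k div (D+1)))"
    have "inj_on f Bk"
    proof (rule inj_onI)
      fix x y assume x: "x \<in> Bk" and y: "y \<in> Bk" and fe: "f x = f y"
      obtain i k where xe: "x = (i,k)" by (cases x)
      obtain i2 k2 where ye: "y = (i2,k2)" by (cases y)
      from fe xe ye have e1: "c k - a i = c k2 - a i2" and e2: "k div (D+1) = k2 div (D+1)"
        unfolding f_def by auto
      have "k = k2"
      proof (cases k k2 rule: linorder_cases)
        case less
        then have "k2 < k + (D+1)" using div_close[of "D+1" k k2] e2 by auto
        moreover have "(i2,k2) \<in> S" using y ye unfolding Bk_def by auto
        ultimately show ?thesis using x xe e1 less unfolding Bk_def by force
      next
        case greater
        then have "k < k2 + (D+1)" using div_close[of "D+1" k2 k] e2 by auto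
        moreover have "(i,k) \<in> S" using x xe unfolding Bk_def by auto
        ultimately show ?thesis using y ye e1 greater unfolding Bk_def by force
      qed simp
      moreover have "i < N" "i2 < N" using x y xe ye unfolding Bk_def S_def by auto
      moreover have "a i = a i2" using e1 \<open>k = k2\<close> by simp
      ultimately have "i = i2" using aiff[of i i2] aiff[of i2 i] by (cases i i2 rule: linorder_cases) auto
      then show "x = y" using xe ye \<open>k = k2\<close> by simp
    qed
    moreover have "f ` Bk \<subseteq> B \<times> {..N div (D+1)}"
      by (auto simp: f_def Bk_def S_def div_le_mono)
    ultimately have "card Bk \<le> card (B \<times> {..N div (D+1)})"
      by (metis card_inj_on_le finite_SigmaI finite_atMost fB)
    then show ?thesis by (simp add: card_cartesian_product cB)
  qed
  have "card S \<le> card (G \<union> Bi \<union> Bk)"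
  proof (rule card_mono)
    have "G \<union> Bi \<union> Bk \<subseteq> S" by (auto simp: G_def Bi_def Bk_def)
    then show "finite (G \<union> Bi \<union> Bk)" using finS finite_subset by blast
  qed (rule cover)
  also have "\<dots> \<le> card G + card Bi + card Bk"
    by (meson card_Un_le add_le_mono order_trans le_refl)
  finally show ?thesis using cardG cardBi cardBk unfolding S_def by linarith
qed



lemma real_bound:
  fixes N :: nat assumes N: "N \<ge> 1"
  defines "D \<equiv> nat \<lfloor>real N powr (1/3)\<rfloor>"
  shows "real (N * (D * D) + 2 * (N * (N div (D+1) + 1))) \<le> 5 * real N powr (5/3)"
proof -
  define r where "r = real N powr (1/3)"
  have Npos: "real N > 0" using N by simp
  have rpos: "r > 0" using Npos by (simp add: r_def)
  have fl: "real D = of_int \<lfloor>r\<rfloor>" using rpos unfolding D_def r_def by simp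
  have Dle: "real D \<le> r" using fl by simp
  have Dgt: "r < real D + 1" using fl by linarith
  have rr: "r * r = real N powr (2/3)" unfolding r_def by (simp add: powr_add[symmetric])
  have N53: "real N * real N powr (2/3) = real N powr (5/3)"
  proof -
    have "real N powr (5/3) = real N powr (1 + 2/3)" by simp
    also have "\<dots> = real N powr 1 * real N powr (2/3)" by (rule powr_add)
    finally show ?thesis using Npos by simp
  qed
  have t1: "real (N * (D * D)) \<le> real N powr (5/3)"
  proof -
    have "real D * real D \<le> r * r" using Dle by (simp add: mult_mono)
    then have "real N * (real D * real D) \<le> real N * (r * r)" using Npos by simp
    then show ?thesis using rr N53 by simp
  qed
  have NN: "real N * real N = real N powr (5/3) * r"
  proof -
    have "real N powr (5/3) * r = real N powr 2" unfolding r_def by (simp add: powr_add[symmetric])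
    also have "\<dots> = real N ^ 2" using Npos by (simp add: powr_realpow[of _ 2, simplified])
    finally show ?thesis by (simp add: power2_eq_square)
  qed
  have t2: "real (N * (N div (D+1))) \<le> real N powr (5/3)"
  proof -
    have "real (N div (D+1)) \<le> real N / real (D+1)" by (rule of_nat_div_le_of_nat)
    also have "\<dots> \<le> real N / r" using Dgt rpos by (simp add: frac_le)
    finally have "real N * real (N div (D+1)) \<le> real N * (real N / r)" using Npos by (intro mult_left_mono) auto
    also have "\<dots> = real N powr (5/3)" using NN rpos by (simp add: field_simps)
    finally show ?thesis by simp
  qed
  have t3: "real N \<le> real N powr (5/3)"
  proof -
    have "real N powr 1 \<le> real N powr (5/3)" using N by (intro powr_mono) auto
    then show ?thesis using Npos by simp
  qed
  show ?thesis using t1 t2 t3 by simp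
qed

theorem mainTheorem13:
  shows "\<exists>K::real. K > 0 \<and> (\<forall>(N::nat) (A::real set) (B::real set) (C::real set).
     convex_set A \<and> convex_set B \<and> convex_set C \<and>
     card A = N \<and> card B = N \<and> card C = N \<longrightarrow>
     real (card {(a, b, c). a \<in> A \<and> b \<in> B \<and> c \<in> C \<and> a + b = c})
       \<le> K * real N powr (5/3))"
proof (intro exI[of _ 5] conjI allI impI)
  fix N A B C assume h: "convex_set A \<and> convex_set B \<and> convex_set C \<and> card A = N \<and> card B = N \<and> card C = N"
  then have fA: "finite A" and fB: "finite B" and fC: "finite C" and cA: "card A = N" and cB: "card B = N"
    and cC: "card C = N" and cvC: "convex_set C" by (auto simp: convex_set_def)
  define T where "T = {(a, b, c). a \<in> A \<and> b \<in> B \<and> c \<in> C \<and> a + b = c}"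
  define a where "a = (\<lambda>i. sorted_list_of_set A ! i)"
  define c where "c = (\<lambda>i. sorted_list_of_set C ! i)"
  define S where "S = {(i,k). i < N \<and> k < N \<and> c k - a i \<in> B}"
  have lA: "length (sorted_list_of_set A) = N" using cA by simp
  have lC: "length (sorted_list_of_set C) = N" using cC by simp
  have am: "\<And>i j. i < j \<Longrightarrow> j < N \<Longrightarrow> a i < a j"
    unfolding a_def using strict_sorted_list_of_set[of A] lA by (metis sorted_wrt_nth_less)
  have cm: "\<And>i j. i < j \<Longrightarrow> j < N \<Longrightarrow> c i < c j"
    unfolding c_def using strict_sorted_list_of_set[of C] lC by (metis sorted_wrt_nth_less)
  have cv: "\<And>k k2 q. 1 \<le> q \<Longrightarrow> k + q < N \<Longrightarrow> k2 + q < N \<Longrightarrow>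
               c (k+q) - c k = c (k2+q) - c k2 \<Longrightarrow> k = k2"
    unfolding c_def using conv_inj[OF cvC cC] by blast
  have cS: "card S \<le> N * (D * D) + 2 * (N * (N div (D+1) + 1))" for D
    unfolding S_def by (rule count_bound[OF am cm cv fB cB])
  have injA: "i = j" if "a i = a j" "i < N" "j < N" for i j
    using that distinct_sorted_list_of_set[of A] lA unfolding a_def by (simp add: nth_eq_iff_index_eq)
  have injC: "i = j" if "c i = c j" "i < N" "j < N" for i j
    using that distinct_sorted_list_of_set[of C] lC unfolding c_def by (simp add: nth_eq_iff_index_eq)
  define h where "h = (\<lambda>(i,k). (a i, c k - a i, c k))"
  have TS: "T = h ` S"
  proof
    show "T \<subseteq> h ` S"
    proof
      fix t assume "t \<in> T"
      then obtain x y z where t: "t = (x,y,z)" "x \<in> A" "y \<in> B" "z \<in> C" "x + y = z" unfolding T_def by auto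
      obtain i where i: "i < N" "a i = x" using t(2) fA lA unfolding a_def
        by (metis in_set_conv_nth set_sorted_list_of_set)
      obtain k where k: "k < N" "c k = z" using t(4) fC lC unfolding c_def
        by (metis in_set_conv_nth set_sorted_list_of_set)
      have "c k - a i = y" using i k t by linarith
      have "(i,k) \<in> S" unfolding S_def using i(1) k(1) t(3) \<open>c k - a i = y\<close> by simp
      moreover have "t = h (i,k)" using i k t unfolding h_def by auto
      ultimately show "t \<in> h ` S" by blast
    qed
  next
    show "h ` S \<subseteq> T"
    proof
      fix t assume "t \<in> h ` S"
      then obtain i k where ik: "i < N" "k < N" "c k - a i \<in> B" "t = h (i,k)" unfolding S_def by auto
      have "a i \<in> A" using ik lA fA unfolding a_def by (metis nth_mem set_sorted_list_of_set)
      moreover have "c k \<in> C" using ik lC fC unfolding c_def by (metis nth_mem set_sorted_list_of_set)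
      ultimately show "t \<in> T" using ik unfolding T_def h_def by auto
    qed
  qed
  have "inj_on h S"
  proof (rule inj_onI)
    fix x y assume x: "x \<in> S" and y: "y \<in> S" and e: "h x = h y"
    obtain i k where xe: "x = (i,k)" by (cases x)
    obtain i2 k2 where ye: "y = (i2,k2)" by (cases y)
    have b: "i < N" "k < N" "i2 < N" "k2 < N" using x y xe ye unfolding S_def by auto
    have "a i = a i2" "c k = c k2" using e xe ye unfolding h_def by auto
    then have "i = i2" "k = k2" using injA injC b by blast+
    then show "x = y" using xe ye by simp
  qed
  then have cT: "card T = card S" using TS card_image by blast
  show "real (card {(a, b, c). a \<in> A \<and> b \<in> B \<and> c \<in> C \<and> a + b = c}) \<le> 5 * real N powr (5/3)"
  proof (cases "N = 0")
    case True
    then have "S = {}" unfolding S_def by auto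
    then show ?thesis using cT T_def by simp
  next
    case False
    then have "N \<ge> 1" by simp
    have r1: "real (card S) \<le> 5 * real N powr (5/3)"
      using real_bound[OF \<open>N \<ge> 1\<close>] cS[of "nat \<lfloor>real N powr (1/3)\<rfloor>"]
      by (meson of_nat_le_iff order_trans)
    note cT
    have "real (card T) \<le> 5 * real N powr (5/3)" using r1 cT by simp
    then show ?thesis unfolding T_def .
  qed
qed simp


end
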